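(* Assume the setting described in the context. Let $\lambda\in\mathbb{R}^F$ satisfy $$\lambda_f\ge\sum_{\sigma\in f:\,\sigma'\in A(f,\sigma)}\rho(\sigma'\mid f,\sigma)\frac{\omega(\sigma)}{\omega(\sigma')}\quad\text{for all }f\in F,\ \sigma'\in\Omega.$$ Then for every word $W$ and every state $\sigma\in\Omega$: $$\sum_{\tau:\ \text{word }W,\ \text{last state }\sigma}p(\tau)\le\gamma^{\mathrm{init}}\lambda_W\,\omega(\sigma),\qquad\sum_{\tau:\ \text{word }W}p(\tau)\le\gamma^{\mathrm{init}}\lambda_W,$$ where the sums range over walks $\tau$ with the indicated word (and, in the first sum, with last state $\sigma$).
   Context: Setting: $\Omega$ is a finite set and $F$ a finite set of flaws, each a nonempty subset of $\Omega$; $F_\sigma=\{f:\sigma\in f\}$. For $\sigma\in\Omega$ and $f\in F_\sigma$ there is a probability distribution $\rho(\cdot\mid f,\sigma)$ on $\Omega$ with support $A(f,\sigma)$. $\omega$ is a probability distribution on $\Omega$ with $\omega(\sigma)>0$ for all $\sigma$, and $\omega^{\mathrm{init}}$ is a probability distribution on $\Omega$. Set $\gamma^{\mathrm{init}}=\max_\sigma\omega^{\mathrm{init}}(\sigma)/\omega(\sigma)$. A walk is $\tau=\sigma_1\xrightarrow{w_1}\sigma_2\cdots\xrightarrow{w_t}\sigma_{t+1}$ with $w_i\in F_{\sigma_i}$ and $\sigma_{i+1}\in A(w_i,\sigma_i)$; the walk with $t=0$ consists of a single state. Its word is $w_1\ldots w_t$, and $p(\tau)=\omega^{\mathrm{init}}(\sigma_1)\prod_{i=1}^t\rho(\sigma_{i+1}\mid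 w_i,\sigma_i)$. For a word $W=w_1\ldots w_t$, $\lambda_W=\prod_i\lambda_{w_i}$. *)

theory Defs
  imports Complex_Main
begin

text \<open>States have type 'a, the state space is a finite set Omega :: 'a set.
  Flaws are subsets of Omega; F :: 'a set set.
  rho f s s' is the probability rho(s' | f, s).\<close>

definition actions :: "'a set \<Rightarrow> ('a set \<Rightarrow> 'a \<Rightarrow> 'a \<Rightarrow> real) \<Rightarrow> 'a set \<Rightarrow> 'a \<Rightarrow> 'a set" where
  "actions Omega rho f s = {s' \<in> Omega. rho f s s' > 0}"

definition is_walk ::
  "'a set \<Rightarrow> 'a set set \<Rightarrow> ('a set \<Rightarrow> 'a \<Rightarrow> 'a \<Rightarrow> real) \<Rightarrow> 'a list \<Rightarrow> 'a set list \<Rightarrow> bool" where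
  "is_walk Omega F rho ss W \<longleftrightarrow>
     length ss = Suc (length W) \<and> ss ! 0 \<in> Omega \<and>
     (\<forall>i < length W. W ! i \<in> F \<and> ss ! i \<in> W ! i \<and>
        ss ! Suc i \<in> actions Omega rho (W ! i) (ss ! i))"

definition walks_with_word ::
  "'a set \<Rightarrow> 'a set set \<Rightarrow> ('a set \<Rightarrow> 'a \<Rightarrow> 'a \<Rightarrow> real) \<Rightarrow> 'a set list \<Rightarrow> 'a list set" where
  "walks_with_word Omega F rho W = {ss. is_walk Omega F rho ss W}"

definition walk_prob ::
  "('a \<Rightarrow> real) \<Rightarrow> ('a set \<Rightarrow> 'a \<Rightarrow> 'a \<Rightarrow> real) \<Rightarrow> 'a list \<Rightarrow> 'a set list \<Rightarrow> real" where
  "walk_prob omega_init rho ss W =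
     omega_init (ss ! 0) * (\<Prod>i < length W. rho (W ! i) (ss ! i) (ss ! Suc i))"

definition word_weight :: "('a set \<Rightarrow> real) \<Rightarrow> 'a set list \<Rightarrow> real" where
  "word_weight lam W = (\<Prod>i < length W. lam (W ! i))"

definition gamma_init :: "'a set \<Rightarrow> ('a \<Rightarrow> real) \<Rightarrow> ('a \<Rightarrow> real) \<Rightarrow> real" where
  "gamma_init Omega omega_init omega = Max ((\<lambda>s. omega_init s / omega s) ` Omega)"

end

theory Submission
  imports Defs
begin
lemma last_walk: "is_walk Om F rho ss W \<Longrightarrow> last ss = ss ! length W"
  unfolding is_walk_def by (metis diff_Suc_1 last_conv_nth list.size(3) nat.distinct(1))

lemma walk_snoc: "is_walk Om F rho ss (W@[f]) \<longleftrightarrow>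
  (\<exists>ss' x. ss = ss'@[x] \<and> is_walk Om F rho ss' W \<and> f\<in>F \<and> last ss' \<in> f \<and> x \<in> actions Om rho f (last ss'))"
proof
  assume a: "is_walk Om F rho ss (W@[f])"
  hence len: "length ss = Suc (Suc (length W))" by (simp add: is_walk_def)
  hence ne: "ss \<noteq> []" by auto
  define ss' where "ss' = butlast ss"
  have eq: "ss = ss' @ [last ss]" using ne by (simp add: ss'_def)
  have l': "length ss' = Suc (length W)" using len by (simp add: ss'_def)
  have nth': "\<And>i. i < Suc (length W) \<Longrightarrow> ss' ! i = ss ! i" using l' by (simp add: ss'_def nth_butlast)
  have ls': "last ss' = ss ! length W" using l' nth' by (metis diff_Suc_1 last_conv_nth lessI list.size(3) nat.distinct(1))
  have lss: "last ss = ss ! Suc (length W)" using len by (simp add: last_conv_nth ne)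
  have w: "is_walk Om F rho ss' W"
    unfolding is_walk_def
  proof (intro conjI)
    show "length ss' = Suc (length W)" using l' .
    show "ss' ! 0 \<in> Om" using a nth' by (simp add: is_walk_def)
    show "\<forall>i<length W. W ! i \<in> F \<and> ss' ! i \<in> W ! i \<and> ss' ! Suc i \<in> actions Om rho (W ! i) (ss' ! i)"
    proof (intro allI impI)
    fix i assume i: "i < length W"
    have "(W@[f]) ! i \<in> F \<and> ss ! i \<in> (W@[f]) ! i \<and> ss ! Suc i \<in> actions Om rho ((W@[f]) ! i) (ss ! i)"
      using a i unfolding is_walk_def by simp
    thus "W ! i \<in> F \<and> ss' ! i \<in> W ! i \<and> ss' ! Suc i \<in> actions Om rho (W ! i) (ss' ! i)"
      using i nth' by (simp add: nth_append)
    qed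
  qed
  have "f \<in> F \<and> ss ! length W \<in> f \<and> ss ! Suc (length W) \<in> actions Om rho f (ss ! length W)"
    using a unfolding is_walk_def by (metis (no_types, lifting) length_append_singleton lessI nth_append_length)
  thus "\<exists>ss' x. ss = ss'@[x] \<and> is_walk Om F rho ss' W \<and> f\<in>F \<and> last ss' \<in> f \<and> x \<in> actions Om rho f (last ss')"
    using eq w ls' lss by metis
next
  assume "\<exists>ss' x. ss = ss'@[x] \<and> is_walk Om F rho ss' W \<and> f\<in>F \<and> last ss' \<in> f \<and> x \<in> actions Om rho f (last ss')"
  then obtain ss' x where e: "ss = ss'@[x]" and w: "is_walk Om F rho ss' W" and f: "f\<in>F" "last ss' \<in> f"
    "x \<in> actions Om rho f (last ss')" by blast
  have l: "length ss' = Suc (length W)" using w by (simp add: is_walk_def)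
  have ls: "last ss' = ss' ! length W" using last_walk[OF w] .
  show "is_walk Om F rho ss (W@[f])"
    unfolding is_walk_def e
  proof (intro conjI)
    show "length (ss' @ [x]) = Suc (length (W @ [f]))" using l by simp
    show "(ss' @ [x]) ! 0 \<in> Om" using w l by (simp add: is_walk_def nth_append)
    show "\<forall>i<length (W @ [f]). (W @ [f]) ! i \<in> F \<and> (ss' @ [x]) ! i \<in> (W @ [f]) ! i \<and>
         (ss' @ [x]) ! Suc i \<in> actions Om rho ((W @ [f]) ! i) ((ss' @ [x]) ! i)"
    proof (intro allI impI)
    fix i assume i: "i < length (W @ [f])"
    show "(W @ [f]) ! i \<in> F \<and> (ss' @ [x]) ! i \<in> (W @ [f]) ! i \<and>
         (ss' @ [x]) ! Suc i \<in> actions Om rho ((W @ [f]) ! i) ((ss' @ [x]) ! i)"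
    proof (cases "i < length W")
      case True thus ?thesis using w l unfolding is_walk_def by (auto simp: nth_append)
    next
      case False hence "i = length W" using i by simp
      thus ?thesis using f l ls by (auto simp: nth_append)
    qed
    qed
  qed
qed

lemma prob_snoc: "length ss' = Suc (length W) \<Longrightarrow>
  walk_prob oi rho (ss'@[x]) (W@[f]) = walk_prob oi rho ss' W * rho f (last ss') x"
proof -
  assume l: "length ss' = Suc (length W)"
  have "(\<Prod>i<length W. rho ((W@[f]) ! i) ((ss'@[x]) ! i) ((ss'@[x]) ! Suc i))
      = (\<Prod>i<length W. rho (W ! i) (ss' ! i) (ss' ! Suc i))"
    using l by (intro prod.cong refl) (simp add: nth_append)
  moreover have "last ss' = ss' ! length W" using l
    by (metis diff_Suc_1 last_conv_nth list.size(3) nat.distinct(1))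
  ultimately show ?thesis unfolding walk_prob_def using l
    by (simp add: lessThan_Suc nth_append mult.assoc del: prod.lessThan_Suc)
qed

theorem lemma1:
  fixes Omega :: "'a set" and F :: "'a set set"
    and rho :: "'a set \<Rightarrow> 'a \<Rightarrow> 'a \<Rightarrow> real"
    and omega omega_init :: "'a \<Rightarrow> real"
    and lam :: "'a set \<Rightarrow> real"
    and W :: "'a set list" and s :: 'a
  assumes fin_Omega: "finite Omega"
    and fin_F: "finite F"
    and flaws: "\<And>f. f \<in> F \<Longrightarrow> f \<noteq> {} \<and> f \<subseteq> Omega"
    and rho_nonneg: "\<And>f x y. f \<in> F \<Longrightarrow> x \<in> f \<Longrightarrow> y \<in> Omega \<Longrightarrow> rho f x y \<ge> 0"
    and rho_out: "\<And>f x y. f \<in> F \<Longrightarrow> x \<in> f \<Longrightarrow> y \<notin> Omega \<Longrightarrow> rho f x y = 0"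
    and rho_sum: "\<And>f x. f \<in> F \<Longrightarrow> x \<in> f \<Longrightarrow> (\<Sum>y\<in>Omega. rho f x y) = 1"
    and omega_pos: "\<And>x. x \<in> Omega \<Longrightarrow> omega x > 0"
    and omega_sum: "(\<Sum>x\<in>Omega. omega x) = 1"
    and init_nonneg: "\<And>x. x \<in> Omega \<Longrightarrow> omega_init x \<ge> 0"
    and init_sum: "(\<Sum>x\<in>Omega. omega_init x) = 1"
    and lam_bound: "\<And>f s'. f \<in> F \<Longrightarrow> s' \<in> Omega \<Longrightarrow>
        lam f \<ge> (\<Sum>x\<in>{x \<in> f. s' \<in> actions Omega rho f x}. rho f x s' * omega x / omega s')"
    and W_word: "set W \<subseteq> F"
    and s_in: "s \<in> Omega"
  shows "((\<Sum>ss\<in>{ss \<in> walks_with_word Omega F rho W. last ss = s}. walk_prob omega_init rho ss W)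
           \<le> gamma_init Omega omega_init omega * word_weight lam W * omega s) \<and>
         ((\<Sum>ss\<in>walks_with_word Omega F rho W. walk_prob omega_init rho ss W)
           \<le> gamma_init Omega omega_init omega * word_weight lam W)"
proof -
  let ?walks = "walks_with_word Omega F rho"
  let ?P = "\<lambda>W s. (\<Sum>ss\<in>{ss \<in> ?walks W. last ss = s}. walk_prob omega_init rho ss W)"
  let ?g = "gamma_init Omega omega_init omega"
  have Omega_ne: "Omega \<noteq> {}" using s_in by auto
  have walk_in: "set ss \<subseteq> Omega" if w: "is_walk Omega F rho ss V" for ss V
  proof
    fix y assume "y \<in> set ss"
    then obtain i where i: "i < length ss" "ss ! i = y" by (auto simp: in_set_conv_nth)
    show "y \<in> Omega"
    proof (cases i)
      case 0 thus ?thesis using w i by (simp add: is_walk_def)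
    next
      case (Suc j) hence "j < length V" using w i by (simp add: is_walk_def)
      hence "ss ! Suc j \<in> actions Omega rho (V ! j) (ss ! j)" using w by (simp add: is_walk_def)
      thus ?thesis using Suc i by (simp add: actions_def)
    qed
  qed
  have fin_walks: "finite (?walks V)" for V
  proof (rule finite_subset)
    show "?walks V \<subseteq> {ss. set ss \<subseteq> Omega \<and> length ss = Suc (length V)}"
      using walk_in by (auto simp: walks_with_word_def is_walk_def)
    show "finite {ss. set ss \<subseteq> Omega \<and> length ss = Suc (length V)}"
      using finite_lists_length_eq[OF fin_Omega] by simp
  qed
  have ratio: "omega_init x / omega x \<le> ?g" if "x \<in> Omega" for x
    unfolding gamma_init_def using that fin_Omega by (intro Max_ge) auto
  have g_ge1: "?g \<ge> 1"
  proof (rule ccontr)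
    assume "\<not> ?g \<ge> 1"
    hence "\<forall>x\<in>Omega. omega_init x < omega x"
      using ratio omega_pos by (smt (verit) divide_less_eq_1_pos)
    hence "(\<Sum>x\<in>Omega. omega_init x) < (\<Sum>x\<in>Omega. omega x)"
      using fin_Omega Omega_ne by (intro sum_strict_mono) auto
    thus False using init_sum omega_sum by simp
  qed
  have lam_nn: "lam f \<ge> 0" if "f \<in> F" for f
  proof -
    obtain s' where s': "s' \<in> Omega" using Omega_ne by auto
    have "0 \<le> (\<Sum>x\<in>{x \<in> f. s' \<in> actions Omega rho f x}. rho f x s' * omega x / omega s')"
      using that s' rho_nonneg omega_pos flaws[OF that] by (intro sum_nonneg) (auto intro!: divide_nonneg_nonneg mult_nonneg_nonneg less_imp_le[OF omega_pos] subsetD[OF conjunct2[OF flaws[OF that]]])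
    thus ?thesis using lam_bound[OF that s'] by linarith
  qed
  have main: "\<forall>s\<in>Omega. ?P V s \<le> ?g * word_weight lam V * omega s" if "set V \<subseteq> F" for V
    using that
  proof (induction V rule: rev_induct)
    case Nil
    show ?case
    proof
      fix s assume s: "s \<in> Omega"
      have "{ss \<in> ?walks []. last ss = s} = {[s]}"
        using s by (auto simp: walks_with_word_def is_walk_def length_Suc_conv)
      hence "?P [] s = omega_init s" by (simp add: walk_prob_def)
      also have "\<dots> = (omega_init s / omega s) * omega s" using omega_pos[OF s] by simp
      also have "\<dots> \<le> ?g * omega s" using ratio[OF s] omega_pos[OF s] by (intro mult_right_mono) auto
      finally show "?P [] s \<le> ?g * word_weight lam [] * omega s" by (simp add: word_weight_def)
    qed
  next
    case (snoc f V)
    hence fF: "f \<in> F" and VF: "set V \<subseteq> F" by auto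
    have IH: "\<And>s. s \<in> Omega \<Longrightarrow> ?P V s \<le> ?g * word_weight lam V * omega s" using snoc VF by blast
    have wwnn: "word_weight lam V \<ge> 0"
      unfolding word_weight_def using VF lam_nn by (intro prod_nonneg) (auto simp: subset_iff)
    have C: "?g * word_weight lam V \<ge> 0" using g_ge1 wwnn by simp
    show ?case
    proof
      fix s' assume s': "s' \<in> Omega"
      let ?B = "{x \<in> f. s' \<in> actions Omega rho f x}"
      let ?S = "{ss \<in> ?walks V. last ss \<in> f \<and> s' \<in> actions Omega rho f (last ss)}"
      have setq: "{ss \<in> ?walks (V@[f]). last ss = s'} = (\<lambda>ss. ss @ [s']) ` ?S"
        using fF by (auto simp: walks_with_word_def walk_snoc)
      have inj: "inj_on (\<lambda>ss. ss @ [s']) ?S" by (auto simp: inj_on_def)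
      have finS: "finite ?S" using fin_walks[of V] by (rule finite_subset[rotated]) auto
      have finB: "finite ?B" using flaws[OF fF] fin_Omega by (auto intro: finite_subset)
      have "?P (V@[f]) s' = (\<Sum>ss\<in>?S. walk_prob omega_init rho ss V * rho f (last ss) s')"
        unfolding setq sum.reindex[OF inj] o_def
        by (intro sum.cong refl prob_snoc) (auto simp: walks_with_word_def is_walk_def)
      also have "\<dots> = (\<Sum>x\<in>?B. \<Sum>ss\<in>{ss\<in>?S. last ss = x}. walk_prob omega_init rho ss V * rho f (last ss) s')"
        by (rule sum.group[symmetric, OF finS finB]) auto
      also have "\<dots> = (\<Sum>x\<in>?B. rho f x s' * ?P V x)"
      proof (intro sum.cong refl)
        fix x assume x: "x \<in> ?B"
        have "{ss\<in>?S. last ss = x} = {ss \<in> ?walks V. last ss = x}" using x by auto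
        thus "(\<Sum>ss\<in>{ss\<in>?S. last ss = x}. walk_prob omega_init rho ss V * rho f (last ss) s') = rho f x s' * ?P V x"
          by (simp add: sum_distrib_left mult.commute)
      qed
      also have "\<dots> \<le> (\<Sum>x\<in>?B. rho f x s' * (?g * word_weight lam V * omega x))"
      proof (intro sum_mono mult_left_mono)
        fix x assume x: "x \<in> ?B"
        hence xO: "x \<in> Omega" using flaws[OF fF] by auto
        show "?P V x \<le> ?g * word_weight lam V * omega x" using IH[OF xO] .
        show "0 \<le> rho f x s'" using rho_nonneg[OF fF _ s'] x by auto
      qed
      also have "\<dots> = ?g * word_weight lam V * omega s' * (\<Sum>x\<in>?B. rho f x s' * omega x / omega s')"
        using omega_pos[OF s'] by (simp add: sum_distrib_left field_simps)
      also have "\<dots> \<le> ?g * word_weight lam V * omega s' * lam f"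
        using lam_bound[OF fF s'] C omega_pos[OF s'] by (intro mult_left_mono) auto
      also have "\<dots> = ?g * word_weight lam (V@[f]) * omega s'"
        by (simp add: word_weight_def lessThan_Suc nth_append del: prod.lessThan_Suc)
      finally show "?P (V@[f]) s' \<le> ?g * word_weight lam (V@[f]) * omega s'" .
    qed
  qed
  have M: "\<forall>s\<in>Omega. ?P W s \<le> ?g * word_weight lam W * omega s" using main W_word by blast
  have "(\<Sum>ss\<in>?walks W. walk_prob omega_init rho ss W) = (\<Sum>x\<in>Omega. ?P W x)"
    by (rule sum.group[symmetric, OF fin_walks fin_Omega])
       (auto simp: walks_with_word_def, metis walk_in is_walk_def last_in_set list.size(3) nat.distinct(1) subsetD)
  also have "\<dots> \<le> (\<Sum>x\<in>Omega. ?g * word_weight lam W * omega x)"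
    using M by (intro sum_mono) auto
  also have "\<dots> = ?g * word_weight lam W" by (simp add: sum_distrib_left[symmetric] omega_sum)
  finally show ?thesis using M s_in by blast
qed

end
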